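(* Let $F:\mathbb{R}^d\to\mathbb{R}^d$ be $L$-Lipschitz, $G:\mathbb{R}^d\rightrightarrows\mathbb{R}^d$ maximally monotone, the solution set of $0\in F(x)+G(x)$ nonempty, and let $x^\star$ be a solution with $\langle u,x-x^\star\rangle\ge-\rho\|u\|^2$ for all $(x,u)$ in the graph of $F+G$, where $0<\rho<\eta$. Let $\alpha=1-\frac\rho\eta$, $\alpha_k=\frac{\alpha}{\sqrt{k+2}\log(k+3)}$, and let $(x_k)$ be random iterates with $x_{k+1}=(1-\alpha_k)x_k+\alpha_k\widetilde J_{\eta(F+G)}(x_k)$, where the random points $\widetilde J_{\eta(F+G)}(x_k)$ satisfy $\mathbb{E}_k\|\widetilde J_{\eta(F+G)}(x_k)-J_{\eta(F+G)}(x_k)\|^2\le\varepsilon_{k,v}^2$ and $\|\mathbb{E}_k[\widetilde J_{\eta(F+G)}(x_k)]-J_{\eta(F+G)}(x_k)\|\le\varepsilon_{k,b}$. Then $$\frac\alpha4\sum_{k=0}^{K-1}\alpha_k\mathbb{E}\|(\mathrm{Id}-J_{\eta(F+G)})(x_k)\|^2\le\frac12\|x_0-x^\star\|^2+\frac32\sum_{k=0}^{K-1}\alpha_k^2\mathbb{E}[\varepsilon_{k,v}^2]+\sum_{k=0}^{K-1}\alpha_k\mathbb{E}\big[\|x_k-x^\star\|\varepsilon_{k,b}\big].$$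
   Context: For an operator $A$, $J_A=(\mathrm{Id}+A)^{-1}$. $\mathbb{E}_k$ denotes expectation conditioned on the randomness of $x_1,\dots,x_k$; $\varepsilon_{k,v},\varepsilon_{k,b}$ may be random quantities measurable with respect to that conditioning. *)

theory Defs
  imports "HOL-Analysis.Analysis" "HOL-Probability.Probability"
begin

text \<open>Set-valued operators on R^d are represented by their graphs.\<close>

definition monotone_op :: "('a::real_inner \<times> 'a) set \<Rightarrow> bool" where
  "monotone_op A \<longleftrightarrow> (\<forall>(x,u)\<in>A. \<forall>(y,v)\<in>A. inner (u - v) (x - y) \<ge> 0)"

definition max_monotone :: "('a::real_inner \<times> 'a) set \<Rightarrow> bool" where
  "max_monotone A \<longleftrightarrow> monotone_op A \<and> (\<forall>B. monotone_op B \<and> A \<subseteq> B \<longrightarrow> B = A)"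

definition op_sum :: "('a \<Rightarrow> 'a::real_vector) \<Rightarrow> ('a \<times> 'a) set \<Rightarrow> ('a \<times> 'a) set" where
  "op_sum F G = {(x, F x + u) | x u. (x, u) \<in> G}"

text \<open>Resolvent J_{\<eta>A} = (Id + \<eta>A)^{-1} evaluated at x (as a set).\<close>
definition resolvent :: "real \<Rightarrow> ('a::real_vector \<times> 'a) set \<Rightarrow> 'a \<Rightarrow> 'a set" where
  "resolvent \<eta> A x = {y. \<exists>u. (y, u) \<in> A \<and> x = y + \<eta> *\<^sub>R u}"

definition nat_filt :: "'w measure \<Rightarrow> (nat \<Rightarrow> 'w \<Rightarrow> 'b::topological_space) \<Rightarrow> nat \<Rightarrow> 'w measure" where
  "nat_filt M X k = sigma (space M) (\<Union>i\<in>{..k}. {X i -` A \<inter> space M | A. A \<in> sets borel})"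

definition vec_cond_exp :: "'w measure \<Rightarrow> 'w measure \<Rightarrow> ('w \<Rightarrow> real^'n) \<Rightarrow> 'w \<Rightarrow> real^'n" where
  "vec_cond_exp M F X = (\<lambda>w. \<chi> i. real_cond_exp M F (\<lambda>v. X v $ i) w)"

end

theory Submission
  imports Defs
begin



lemma sq_sum_le: "((a::real) + b)\<^sup>2 \<le> 2 * a\<^sup>2 + 2 * b\<^sup>2"
proof -
  have "0 \<le> (a - b)\<^sup>2" by simp
  thus ?thesis unfolding power2_sum power2_diff by linarith
qed

context prob_space begin

definition L2 :: "('a \<Rightarrow> 'b::euclidean_space) \<Rightarrow> bool" where
  "L2 f \<longleftrightarrow> f \<in> borel_measurable M \<and> integrable M (\<lambda>w. (norm (f w))\<^sup>2)"

lemma L2_add: assumes "L2 f" "L2 g" shows "L2 (\<lambda>w. f w + g w)"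
proof -
  have m[measurable]: "f \<in> borel_measurable M" "g \<in> borel_measurable M" using assms L2_def by auto
  have i: "integrable M (\<lambda>w. 2 * (norm (f w))\<^sup>2 + 2 * (norm (g w))\<^sup>2)"
    using assms unfolding L2_def by auto
  have b: "norm ((norm (f w + g w))\<^sup>2) \<le> norm (2 * (norm (f w))\<^sup>2 + 2 * (norm (g w))\<^sup>2)" for w
  proof -
    have "norm (f w + g w) \<le> norm (f w) + norm (g w)" by (rule norm_triangle_ineq)
    hence "(norm (f w + g w))\<^sup>2 \<le> (norm (f w) + norm (g w))\<^sup>2" by (simp add: power_mono)
    also have "\<dots> \<le> 2 * (norm (f w))\<^sup>2 + 2 * (norm (g w))\<^sup>2"
      by (rule sq_sum_le)
    finally show ?thesis by simp
  qed
  have "integrable M (\<lambda>w. (norm (f w + g w))\<^sup>2)"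
    apply (rule Bochner_Integration.integrable_bound[OF i])
     apply measurable
    by (rule AE_I2, rule b)
  thus ?thesis unfolding L2_def by simp
qed

lemma L2_scale: assumes "L2 f" shows "L2 (\<lambda>w. c *\<^sub>R f w)"
  using assms unfolding L2_def by (auto simp: power_mult_distrib)

lemma L2_cong: assumes "L2 f" "\<And>w. w \<in> space M \<Longrightarrow> g w = f w" shows "L2 g"
proof -
  have "g \<in> borel_measurable M" using assms measurable_cong[of M g f] unfolding L2_def by auto
  moreover have "integrable M (\<lambda>w. (norm (g w))\<^sup>2)"
  proof -
    have "integrable M (\<lambda>w. (norm (g w))\<^sup>2) = integrable M (\<lambda>w. (norm (f w))\<^sup>2)"
      by (rule Bochner_Integration.integrable_cong) (auto simp: assms(2))
    thus ?thesis using assms(1) unfolding L2_def by simp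
  qed
  ultimately show ?thesis unfolding L2_def by simp
qed

lemma L2_const: "L2 (\<lambda>w. c)"
  unfolding L2_def by auto

lemma L2_diff: assumes "L2 f" "L2 g" shows "L2 (\<lambda>w. f w - g w)"
  using L2_add[OF assms(1) L2_scale[OF assms(2), of "-1"]] by simp

lemma L2_inner: assumes "L2 f" "L2 g" shows "integrable M (\<lambda>w. inner (f w) (g w))"
proof -
  have m[measurable]: "f \<in> borel_measurable M" "g \<in> borel_measurable M" using assms L2_def by auto
  have i: "integrable M (\<lambda>w. (norm (f w))\<^sup>2 + (norm (g w))\<^sup>2)"
    using assms unfolding L2_def by auto
  have b: "norm (inner (f w) (g w)) \<le> norm ((norm (f w))\<^sup>2 + (norm (g w))\<^sup>2)" for w
  proof -
    have "norm (inner (f w) (g w)) \<le> norm (f w) * norm (g w)" using Cauchy_Schwarz_ineq2 by simp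
    also have "\<dots> \<le> (norm (f w))\<^sup>2 + (norm (g w))\<^sup>2"
    proof -
      have "0 \<le> (norm (f w) - norm (g w))\<^sup>2" by simp
      thus ?thesis unfolding power2_diff using zero_le_power2[of "norm (f w)"] zero_le_power2[of "norm (g w)"] by linarith
    qed
    finally show ?thesis by simp
  qed
  show ?thesis
    apply (rule Bochner_Integration.integrable_bound[OF i])
     apply measurable
    by (rule AE_I2, rule b)
qed

lemma L2_bound: assumes "L2 f" "g \<in> borel_measurable M" "\<And>w. norm (g w) \<le> c * norm (f w)"
  shows "L2 g"
proof -
  have m[measurable]: "g \<in> borel_measurable M" using assms by auto
  have i: "integrable M (\<lambda>w. c\<^sup>2 * (norm (f w))\<^sup>2)" using assms(1) unfolding L2_def by auto
  have b: "norm ((norm (g w))\<^sup>2) \<le> norm (c\<^sup>2 * (norm (f w))\<^sup>2)" for w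
  proof -
    have "(norm (g w))\<^sup>2 \<le> (c * norm (f w))\<^sup>2" using assms(3)[of w] by (simp add: power_mono)
    thus ?thesis by (simp add: power_mult_distrib)
  qed
  have "integrable M (\<lambda>w. (norm (g w))\<^sup>2)"
    apply (rule Bochner_Integration.integrable_bound[OF i])
     apply measurable
    by (rule AE_I2, rule b)
  thus ?thesis unfolding L2_def using assms(2) by simp
qed


lemma L2_comp_prod:
  fixes f g :: "'a \<Rightarrow> real^'n"
  assumes "L2 f" "L2 g" shows "integrable M (\<lambda>w. (f w $ i) * (g w $ i))"
proof -
  have m[measurable]: "f \<in> borel_measurable M" "g \<in> borel_measurable M" using assms L2_def by auto
  have [measurable]: "(\<lambda>w. f w $ i) \<in> borel_measurable M" "(\<lambda>w. g w $ i) \<in> borel_measurable M"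
    using measurable_compose[OF m(1) borel_measurable_nth] measurable_compose[OF m(2) borel_measurable_nth] by auto
  have i: "integrable M (\<lambda>w. (norm (f w))\<^sup>2 + (norm (g w))\<^sup>2)"
    using assms unfolding L2_def by auto
  have b: "norm ((f w $ i) * (g w $ i)) \<le> norm ((norm (f w))\<^sup>2 + (norm (g w))\<^sup>2)" for w
  proof -
    have "norm ((f w $ i) * (g w $ i)) \<le> norm (f w) * norm (g w)"
      unfolding norm_mult by (intro mult_mono) (auto simp: component_le_norm_cart)
    also have "\<dots> \<le> (norm (f w))\<^sup>2 + (norm (g w))\<^sup>2"
    proof -
      have "0 \<le> (norm (f w) - norm (g w))\<^sup>2" by simp
      thus ?thesis unfolding power2_diff using zero_le_power2[of "norm (f w)"] zero_le_power2[of "norm (g w)"] by linarith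
    qed
    finally show ?thesis by simp
  qed
  show ?thesis
    apply (rule Bochner_Integration.integrable_bound[OF i])
     apply measurable
    by (rule AE_I2, rule b)
qed

lemma bias_lemma:
  fixes Y Z V :: "'a \<Rightarrow> real^'n"
  assumes sub: "subalgebra M Fk" and LY: "L2 Y" and LZ: "L2 Z" and LV: "L2 V"
    and ZF: "Z \<in> borel_measurable Fk" and VF: "V \<in> borel_measurable Fk"
    and ebi: "integrable M (\<lambda>w. norm (V w) * eb w)"
    and bd: "AE w in M. norm (vec_cond_exp M Fk Y w - Z w) \<le> eb w"
  shows "(\<integral>w. inner (Y w - Z w) (V w) \<partial>M) \<le> (\<integral>w. norm (V w) * eb w \<partial>M)"
proof -
  interpret FS: finite_measure_subalgebra M Fk
    by (simp add: finite_measure_subalgebra_def finite_measure_subalgebra_axioms_def sub finite_measure_axioms)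
  have YM: "Y \<in> borel_measurable M" using LY L2_def by auto
  let ?c = "\<lambda>i w. real_cond_exp M Fk (\<lambda>v. Y v $ i) w"
  have VFi: "(\<lambda>w. V w $ i) \<in> borel_measurable Fk" for i
    using measurable_compose[OF VF borel_measurable_nth] by simp
  have YMi: "(\<lambda>w. Y w $ i) \<in> borel_measurable M" for i
    using measurable_compose[OF YM borel_measurable_nth] by simp
  have iVY: "integrable M (\<lambda>w. (V w $ i) * (Y w $ i))" for i using L2_comp_prod[OF LV LY] .
  have iVZ: "integrable M (\<lambda>w. (V w $ i) * (Z w $ i))" for i using L2_comp_prod[OF LV LZ] .
  have ce1: "integrable M (\<lambda>w. (V w $ i) * ?c i w)" for i
    using FS.real_cond_exp_intg(1)[OF iVY VFi YMi] .
  have ce2: "(\<integral>w. (V w $ i) * ?c i w \<partial>M) = (\<integral>w. (V w $ i) * (Y w $ i) \<partial>M)" for i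
    using FS.real_cond_exp_intg(2)[OF iVY VFi YMi] .
  have "(\<integral>w. inner (Y w - Z w) (V w) \<partial>M) = (\<integral>w. (\<Sum>i\<in>UNIV. (V w $ i) * (Y w $ i) - (V w $ i) * (Z w $ i)) \<partial>M)"
    by (simp add: inner_vec_def algebra_simps)
  also have "\<dots> = (\<Sum>i\<in>UNIV. (\<integral>w. (V w $ i) * (Y w $ i) \<partial>M) - (\<integral>w. (V w $ i) * (Z w $ i) \<partial>M))"
    using iVY iVZ by (simp add: Bochner_Integration.integral_sum)
  also have "\<dots> = (\<Sum>i\<in>UNIV. (\<integral>w. (V w $ i) * ?c i w \<partial>M) - (\<integral>w. (V w $ i) * (Z w $ i) \<partial>M))"
    using ce2 by simp
  also have "\<dots> = (\<integral>w. (\<Sum>i\<in>UNIV. (V w $ i) * ?c i w - (V w $ i) * (Z w $ i)) \<partial>M)"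
    using ce1 iVZ by (simp add: Bochner_Integration.integral_sum)
  also have "\<dots> = (\<integral>w. inner (vec_cond_exp M Fk Y w - Z w) (V w) \<partial>M)"
    by (simp add: inner_vec_def algebra_simps vec_cond_exp_def)
  also have "\<dots> \<le> (\<integral>w. norm (V w) * eb w \<partial>M)"
  proof (rule integral_mono_AE)
    have "integrable M (\<lambda>w. (\<Sum>i\<in>UNIV. (V w $ i) * ?c i w - (V w $ i) * (Z w $ i)))"
      using ce1 iVZ by auto
    thus "integrable M (\<lambda>w. inner (vec_cond_exp M Fk Y w - Z w) (V w))"
      by (simp add: inner_vec_def algebra_simps vec_cond_exp_def)
    show "integrable M (\<lambda>w. norm (V w) * eb w)" by (rule ebi)
    show "AE w in M. inner (vec_cond_exp M Fk Y w - Z w) (V w) \<le> norm (V w) * eb w"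
      using bd
    proof eventually_elim
      case (elim w)
      have "inner (vec_cond_exp M Fk Y w - Z w) (V w) \<le> norm (vec_cond_exp M Fk Y w - Z w) * norm (V w)"
        by (rule real_inner_class.Cauchy_Schwarz_ineq2[THEN abs_le_D1])
      also have "\<dots> \<le> eb w * norm (V w)" using elim by (simp add: mult_right_mono)
      finally show ?case by (simp add: mult.commute)
    qed
  qed
  finally show ?thesis .
qed

lemma var_lemma:
  fixes h f :: "'a \<Rightarrow> real"
  assumes sub: "subalgebra M Fk" and i: "integrable M f" and e: "integrable M (\<lambda>w. (h w)\<^sup>2)"
    and bd: "AE w in M. real_cond_exp M Fk f w \<le> (h w)\<^sup>2"
  shows "(\<integral>w. f w \<partial>M) \<le> (\<integral>w. (h w)\<^sup>2 \<partial>M)"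
proof -
  interpret FS: finite_measure_subalgebra M Fk
    by (simp add: finite_measure_subalgebra_def finite_measure_subalgebra_axioms_def sub finite_measure_axioms)
  have "(\<integral>w. f w \<partial>M) = (\<integral>w. real_cond_exp M Fk f w \<partial>M)" using FS.real_cond_exp_int(2)[OF i] by simp
  also have "\<dots> \<le> (\<integral>w. (h w)\<^sup>2 \<partial>M)"
    by (rule integral_mono_AE[OF FS.real_cond_exp_int(1)[OF i] e bd])
  finally show ?thesis .
qed

end
lemma step_bounds:
  assumes "0 < (\<alpha>::real)"
  shows "0 < \<alpha> / (sqrt (real k + 2) * ln (real k + 3))"
    and "\<alpha> / (sqrt (real k + 2) * ln (real k + 3)) \<le> 3/4 * \<alpha>"
proof -
  have l3: "1 \<le> ln (3::real)"
  proof -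
    have "ln (exp 1) \<le> ln (3::real)" using exp_le by (subst ln_le_cancel_iff) auto
    thus ?thesis by simp
  qed
  have l: "1 \<le> ln (real k + 3)"
    using l3 by (smt (verit) ln_le_cancel_iff of_nat_0_le_iff)
  have "sqrt 2 \<ge> 4/3"
    by (rule real_le_rsqrt) (simp add: power2_eq_square)
  hence s: "sqrt (real k + 2) \<ge> 4/3" by (smt (verit) of_nat_0_le_iff real_sqrt_le_iff)
  have p: "sqrt (real k + 2) * ln (real k + 3) \<ge> 4/3"
    using mult_mono[OF s l] by simp
  show "0 < \<alpha> / (sqrt (real k + 2) * ln (real k + 3))" using p assms by simp
  have "\<alpha> / (sqrt (real k + 2) * ln (real k + 3)) \<le> \<alpha> / (4/3)"
    using p assms by (intro divide_left_mono) auto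
  thus "\<alpha> / (sqrt (real k + 2) * ln (real k + 3)) \<le> 3/4 * \<alpha>" by simp
qed

lemma pointwise:
  fixes v r e :: "'a::real_inner"
  assumes h: "inner r v \<ge> \<alpha> * (norm r)\<^sup>2" and a: "0 \<le> a"
  shows "(norm (v - a *\<^sub>R (r - e)))\<^sup>2 \<le> (norm v)\<^sup>2 - 2*a*\<alpha>*(norm r)\<^sup>2 + 2*a*inner e v
          + 2*a\<^sup>2*(norm r)\<^sup>2 + 2*a\<^sup>2*(norm e)\<^sup>2"
proof -
  have eq: "(norm (v - a *\<^sub>R (r - e)))\<^sup>2 = (norm v)\<^sup>2 - 2*a*inner r v + 2*a*inner e v + a\<^sup>2 * (norm (r - e))\<^sup>2"
    unfolding power2_norm_eq_inner
    by (simp add: inner_diff_left inner_diff_right inner_commute algebra_simps power2_eq_square)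
  have "(norm (r - e))\<^sup>2 \<le> (norm r + norm e)\<^sup>2"
    using norm_triangle_ineq4[of r e] by (simp add: power_mono)
  also have "\<dots> \<le> 2*(norm r)\<^sup>2 + 2*(norm e)\<^sup>2" by (rule sq_sum_le)
  finally have n: "a\<^sup>2 * (norm (r - e))\<^sup>2 \<le> a\<^sup>2 * (2*(norm r)\<^sup>2 + 2*(norm e)\<^sup>2)"
    by (simp add: mult_left_mono)
  have "2*a*(\<alpha> * (norm r)\<^sup>2) \<le> 2*a*inner r v" using mult_left_mono[OF h, of "2*a"] a by simp
  with eq n show ?thesis by (simp add: algebra_simps)
qed



lemma nat_filt_props:
  assumes X: "\<forall>i. X i \<in> borel_measurable M"
  shows "subalgebra M (nat_filt M X k)"
    and "i \<le> k \<Longrightarrow> X i \<in> borel_measurable (nat_filt M X k)"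
proof -
  define G where "G = (\<Union>i\<in>{..k}. {X i -` A \<inter> space M | A. A \<in> sets (borel::'b measure)})"
  have GP: "G \<subseteq> Pow (space M)" unfolding G_def by auto
  have GM: "G \<subseteq> sets M" unfolding G_def using X measurable_sets by blast
  have sp: "space (nat_filt M X k) = space M" unfolding nat_filt_def G_def[symmetric]
    using GP by simp
  have st: "sets (nat_filt M X k) = sigma_sets (space M) G" unfolding nat_filt_def G_def[symmetric]
    using GP by simp
  show "subalgebra M (nat_filt M X k)" unfolding subalgebra_def sp st
    using sets.sigma_sets_subset[OF GM] by simp
  assume ik: "i \<le> k"
  show "X i \<in> borel_measurable (nat_filt M X k)"
  proof (rule measurableI)
    fix A :: "'b set" assume "A \<in> sets borel"
    hence "X i -` A \<inter> space M \<in> G" unfolding G_def using ik by blast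
    thus "X i -` A \<inter> space (nat_filt M X k) \<in> sets (nat_filt M X k)" unfolding sp st by auto
  qed auto
qed

lemma key_ineq:
  fixes z xs :: "'a::real_inner"
  assumes J: "Jz \<in> resolvent \<eta> A z" and W: "\<forall>(z,u)\<in>A. inner u (z - xs) \<ge> - \<rho> * (norm u)\<^sup>2"
    and r: "0 < \<rho>" "\<rho> < \<eta>"
  shows "inner (z - Jz) (z - xs) \<ge> (1 - \<rho>/\<eta>) * (norm (z - Jz))\<^sup>2"
    and "norm (z - Jz) \<le> norm (z - xs) / (1 - \<rho>/\<eta>)"
proof -
  obtain u where u: "(Jz, u) \<in> A" "z = Jz + \<eta> *\<^sub>R u" using J unfolding resolvent_def by auto
  have w: "inner u (Jz - xs) \<ge> - \<rho> * (norm u)\<^sup>2" using W u(1) by auto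
  have e: "z - Jz = \<eta> *\<^sub>R u" using u(2) by simp
  have "inner (z - Jz) (z - xs) = inner (z - Jz) (z - Jz) + inner (z - Jz) (Jz - xs)"
    by (simp add: inner_diff_right)
  also have "\<dots> = (norm (z - Jz))\<^sup>2 + \<eta> * inner u (Jz - xs)"
    using r by (simp add: e power_mult_distrib power2_norm_eq_inner[symmetric] power2_eq_square)
  also have "\<dots> \<ge> (norm (z - Jz))\<^sup>2 - \<eta> * \<rho> * (norm u)\<^sup>2"
    using w r mult_left_mono[OF w, of \<eta>] by simp
  finally have 1: "inner (z - Jz) (z - xs) \<ge> (norm (z - Jz))\<^sup>2 - \<eta> * \<rho> * (norm u)\<^sup>2" .
  have "(norm (z - Jz))\<^sup>2 = \<eta>\<^sup>2 * (norm u)\<^sup>2" using r by (simp add: e power_mult_distrib)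
  hence "\<eta> * \<rho> * (norm u)\<^sup>2 = \<rho>/\<eta> * (norm (z - Jz))\<^sup>2" using r by (simp add: power2_eq_square field_simps)
  with 1 show A1: "inner (z - Jz) (z - xs) \<ge> (1 - \<rho>/\<eta>) * (norm (z - Jz))\<^sup>2"
    by (simp add: algebra_simps)
  have a: "0 < 1 - \<rho>/\<eta>" using r by simp
  have "(1 - \<rho>/\<eta>) * (norm (z - Jz))\<^sup>2 \<le> norm (z - Jz) * norm (z - xs)"
    using A1 Cauchy_Schwarz_ineq2[of "z - Jz" "z - xs"] by simp
  hence "(1 - \<rho>/\<eta>) * norm (z - Jz) \<le> norm (z - xs)"
    by (cases "norm (z - Jz) = 0") (auto simp: power2_eq_square)
  thus "norm (z - Jz) \<le> norm (z - xs) / (1 - \<rho>/\<eta>)" using a by (simp add: field_simps)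
qed

theorem lemmaC8:
  fixes M :: "'w measure"
    and F :: "real^'n \<Rightarrow> real^'n" and G :: "((real^'n) \<times> (real^'n)) set"
    and J :: "real^'n \<Rightarrow> real^'n"
    and L \<rho> \<eta> :: real and xstar x0 :: "real^'n"
    and x Jt :: "nat \<Rightarrow> 'w \<Rightarrow> real^'n"
    and ev eb :: "nat \<Rightarrow> 'w \<Rightarrow> real"
    and K :: nat
  assumes M: "prob_space M"
    and Lip: "L-lipschitz_on UNIV F"
    and Gmax: "max_monotone G"
    and sol_ne: "{z. (z, 0) \<in> op_sum F G} \<noteq> {}"
    and xstar_sol: "(xstar, 0) \<in> op_sum F G"
    and weak_minty: "\<forall>(z,u)\<in>op_sum F G. inner u (z - xstar) \<ge> - \<rho> * (norm u)\<^sup>2"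
    and rho: "0 < \<rho>" "\<rho> < \<eta>"
    and J_res: "\<forall>z. J z \<in> resolvent \<eta> (op_sum F G) z"
    and J_meas: "J \<in> borel_measurable borel"
    and x0: "\<forall>w\<in>space M. x 0 w = x0"
    and iter: "\<forall>k. \<forall>w\<in>space M. x (Suc k) w =
        (1 - (1 - \<rho>/\<eta>) / (sqrt (real k + 2) * ln (real k + 3))) *\<^sub>R x k w
        + ((1 - \<rho>/\<eta>) / (sqrt (real k + 2) * ln (real k + 3))) *\<^sub>R Jt k w"
    and Jt_meas: "\<forall>k. Jt k \<in> borel_measurable M"
    and Jt_int: "\<forall>k. integrable M (\<lambda>w. (norm (Jt k w))\<^sup>2)"
    and ev_meas: "\<forall>k. ev k \<in> borel_measurable (nat_filt M x k)"
    and eb_meas: "\<forall>k. eb k \<in> borel_measurable (nat_filt M x k)"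
    and ev_int: "\<forall>k. integrable M (\<lambda>w. (ev k w)\<^sup>2)"
    and eb_int: "\<forall>k. integrable M (\<lambda>w. norm (x k w - xstar) * eb k w)"
    and var_bd: "\<forall>k. AE w in M.
        real_cond_exp M (nat_filt M x k) (\<lambda>v. (norm (Jt k v - J (x k v)))\<^sup>2) w \<le> (ev k w)\<^sup>2"
    and bias_bd: "\<forall>k. AE w in M.
        norm (vec_cond_exp M (nat_filt M x k) (Jt k) w - J (x k w)) \<le> eb k w"
  shows "(1 - \<rho>/\<eta>) / 4 * (\<Sum>k<K. (1 - \<rho>/\<eta>) / (sqrt (real k + 2) * ln (real k + 3))
            * (\<integral>w. (norm (x k w - J (x k w)))\<^sup>2 \<partial>M))
         \<le> 1/2 * (norm (x0 - xstar))\<^sup>2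
           + 3/2 * (\<Sum>k<K. ((1 - \<rho>/\<eta>) / (sqrt (real k + 2) * ln (real k + 3)))\<^sup>2
                * (\<integral>w. (ev k w)\<^sup>2 \<partial>M))
           + (\<Sum>k<K. (1 - \<rho>/\<eta>) / (sqrt (real k + 2) * ln (real k + 3))
                * (\<integral>w. norm (x k w - xstar) * eb k w \<partial>M))"
  proof -
  interpret prob_space M by (rule M)
  define \<alpha> where "\<alpha> = 1 - \<rho>/\<eta>"
  define a where "a = (\<lambda>k::nat. \<alpha> / (sqrt (real k + 2) * ln (real k + 3)))"
  have \<alpha>pos: "0 < \<alpha>" unfolding \<alpha>_def using rho by simp
  have apos: "0 < a k" for k unfolding a_def using step_bounds(1)[OF \<alpha>pos] .
  have ale: "a k \<le> 3/4 * \<alpha>" for k unfolding a_def using step_bounds(2)[OF \<alpha>pos] .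
  have iter': "x (Suc k) w = (1 - a k) *\<^sub>R x k w + a k *\<^sub>R Jt k w" if "w \<in> space M" for k w
    using iter that unfolding a_def \<alpha>_def by auto
  have JtL2: "L2 (Jt k)" for k using Jt_meas Jt_int unfolding L2_def by auto
  have xL2: "L2 (x k)" for k
  proof (induction k)
    case 0
    show ?case by (rule L2_cong[OF L2_const[of x0]]) (use x0 in auto)
  next
    case (Suc k)
    show ?case
      by (rule L2_cong[OF L2_add[OF L2_scale[OF Suc] L2_scale[OF JtL2]]]) (rule iter')
  qed
  have xM: "\<forall>k. x k \<in> borel_measurable M" using xL2 unfolding L2_def by auto
  define Fk where "Fk = (\<lambda>k. nat_filt M x k)"
  have sub: "subalgebra M (Fk k)" for k unfolding Fk_def by (rule nat_filt_props(1)[OF xM])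
  have xF: "x k \<in> borel_measurable (Fk k)" for k unfolding Fk_def by (rule nat_filt_props(2)[OF xM]) simp
  have key1: "inner (z - J z) (z - xstar) \<ge> \<alpha> * (norm (z - J z))\<^sup>2" for z
    unfolding \<alpha>_def using key_ineq(1)[OF J_res[rule_format] weak_minty rho] .
  have key2: "norm (z - J z) \<le> (1/\<alpha>) * norm (z - xstar)" for z
    unfolding \<alpha>_def using key_ineq(2)[OF J_res[rule_format] weak_minty rho] by simp
  have JxF: "(\<lambda>w. J (x k w)) \<in> borel_measurable (Fk k)" for k
    using measurable_compose[OF xF J_meas] by simp
  have JxM: "(\<lambda>w. J (x k w)) \<in> borel_measurable M" for k
    using measurable_compose[OF xM[rule_format] J_meas] by simp
  have vL2: "L2 (\<lambda>w. x k w - xstar)" for k by (rule L2_diff[OF xL2 L2_const])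
  have rL2: "L2 (\<lambda>w. x k w - J (x k w))" for k
  proof -
    have "(\<lambda>w. x k w - J (x k w)) \<in> borel_measurable M"
      using xM JxM[of k] by (intro borel_measurable_diff) auto
    thus ?thesis by (rule L2_bound[OF vL2, of _ "1/\<alpha>"]) (use key2 in auto)
  qed
  have JL2: "L2 (\<lambda>w. J (x k w))" for k
    by (rule L2_cong[OF L2_diff[OF xL2[of k] rL2[of k]]]) simp
  have eL2: "L2 (\<lambda>w. Jt k w - J (x k w))" for k by (rule L2_diff[OF JtL2 JL2])
  define D where "D = (\<lambda>k. \<integral>w. (norm (x k w - xstar))\<^sup>2 \<partial>M)"
  define R where "R = (\<lambda>k. \<integral>w. (norm (x k w - J (x k w)))\<^sup>2 \<partial>M)"
  define B where "B = (\<lambda>k. \<integral>w. norm (x k w - xstar) * eb k w \<partial>M)"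
  define V where "V = (\<lambda>k. \<integral>w. (ev k w)\<^sup>2 \<partial>M)"
  define I where "I = (\<lambda>k. \<integral>w. inner (Jt k w - J (x k w)) (x k w - xstar) \<partial>M)"
  define E where "E = (\<lambda>k. \<integral>w. (norm (Jt k w - J (x k w)))\<^sup>2 \<partial>M)"
  have Rnn: "0 \<le> R k" for k unfolding R_def by simp
  have Vnn: "0 \<le> V k" for k unfolding V_def by simp
  have Dnn: "0 \<le> D k" for k unfolding D_def by simp
  have IB: "I k \<le> B k" for k
    unfolding I_def B_def
    by (rule bias_lemma[OF sub JtL2 JL2 vL2 JxF _ eb_int[rule_format] bias_bd[rule_format, unfolded Fk_def[symmetric]]])
      (use xF in measurable)
  have EV: "E k \<le> V k" for k
    unfolding E_def V_def
    by (rule var_lemma[OF sub _ ev_int[rule_format] var_bd[rule_format, unfolded Fk_def[symmetric]]])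
      (use eL2 in \<open>auto simp: L2_def\<close>)
  have stepD: "D (Suc k) \<le> D k - 2 * a k * \<alpha> * R k + 2 * a k * I k + 2 * (a k)\<^sup>2 * R k + 2 * (a k)\<^sup>2 * E k" for k
  proof -
    have pw: "(norm (x (Suc k) w - xstar))\<^sup>2 \<le> (norm (x k w - xstar))\<^sup>2 - 2 * a k * \<alpha> * (norm (x k w - J (x k w)))\<^sup>2
       + 2 * a k * inner (Jt k w - J (x k w)) (x k w - xstar) + 2 * (a k)\<^sup>2 * (norm (x k w - J (x k w)))\<^sup>2
       + 2 * (a k)\<^sup>2 * (norm (Jt k w - J (x k w)))\<^sup>2" if w: "w \<in> space M" for w
    proof -
      have "x (Suc k) w - xstar = (x k w - xstar) - a k *\<^sub>R ((x k w - J (x k w)) - (Jt k w - J (x k w)))"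
        using iter'[OF w] by (simp add: algebra_simps)
      hence "(norm (x (Suc k) w - xstar))\<^sup>2 = (norm ((x k w - xstar) - a k *\<^sub>R ((x k w - J (x k w)) - (Jt k w - J (x k w)))))\<^sup>2"
        by (simp only:)
      also have "\<dots> \<le> (norm (x k w - xstar))\<^sup>2 - 2 * a k * \<alpha> * (norm (x k w - J (x k w)))\<^sup>2
       + 2 * a k * inner (Jt k w - J (x k w)) (x k w - xstar) + 2 * (a k)\<^sup>2 * (norm (x k w - J (x k w)))\<^sup>2
       + 2 * (a k)\<^sup>2 * (norm (Jt k w - J (x k w)))\<^sup>2"
        by (rule pointwise[OF key1[of "x k w"] less_imp_le[OF apos[of k]]])
      finally show ?thesis .
    qed
    have i1: "integrable M (\<lambda>w. (norm (x k w - xstar))\<^sup>2)" using vL2 unfolding L2_def by blast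
    have i2: "integrable M (\<lambda>w. (norm (x k w - J (x k w)))\<^sup>2)" using rL2 unfolding L2_def by blast
    have i3: "integrable M (\<lambda>w. inner (Jt k w - J (x k w)) (x k w - xstar))" by (rule L2_inner[OF eL2 vL2])
    have i4: "integrable M (\<lambda>w. (norm (Jt k w - J (x k w)))\<^sup>2)" using eL2 unfolding L2_def by blast
    have i0: "integrable M (\<lambda>w. (norm (x (Suc k) w - xstar))\<^sup>2)" using vL2 unfolding L2_def by blast
    have "D (Suc k) \<le> (\<integral>w. (norm (x k w - xstar))\<^sup>2 - 2 * a k * \<alpha> * (norm (x k w - J (x k w)))\<^sup>2
       + 2 * a k * inner (Jt k w - J (x k w)) (x k w - xstar) + 2 * (a k)\<^sup>2 * (norm (x k w - J (x k w)))\<^sup>2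
       + 2 * (a k)\<^sup>2 * (norm (Jt k w - J (x k w)))\<^sup>2 \<partial>M)"
      unfolding D_def
      by (rule integral_mono[OF i0 _ pw]) (use i1 i2 i3 i4 in auto)
    also have "\<dots> = D k - 2 * a k * \<alpha> * R k + 2 * a k * I k + 2 * (a k)\<^sup>2 * R k + 2 * (a k)\<^sup>2 * E k"
      unfolding D_def R_def I_def E_def using i1 i2 i3 i4 by simp
    finally show ?thesis .
  qed
  have step: "\<alpha>/2 * (a k * R k) \<le> D k - D (Suc k) + 2 * (a k * B k) + 2 * ((a k)\<^sup>2 * V k)" for k
  proof -
    have "0 \<le> a k * (3/2 * \<alpha> - 2 * a k) * R k"
      using apos[of k] ale[of k] Rnn[of k] by (intro mult_nonneg_nonneg) auto
    moreover have "2 * a k * I k \<le> 2 * a k * B k" using IB[of k] apos[of k] by simp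
    moreover have "2 * (a k)\<^sup>2 * E k \<le> 2 * (a k)\<^sup>2 * V k" using EV[of k] by (simp add: mult_left_mono)
    ultimately show ?thesis using stepD[of k] by (simp add: algebra_simps power2_eq_square)
  qed
  have tel: "\<alpha>/2 * (\<Sum>k<K. a k * R k) \<le> D 0 - D K + 2 * (\<Sum>k<K. a k * B k) + 2 * (\<Sum>k<K. (a k)\<^sup>2 * V k)"
  proof (induction K)
    case 0 show ?case by simp
  next
    case (Suc K)
    thus ?case using step[of K] by (simp add: algebra_simps)
  qed
  have D0: "D 0 = (norm (x0 - xstar))\<^sup>2"
  proof -
    have "D 0 = (\<integral>w. (norm (x0 - xstar))\<^sup>2 \<partial>M)" unfolding D_def
      by (rule Bochner_Integration.integral_cong) (use x0 in auto)
    thus ?thesis by (simp add: prob_space)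
  qed
  have Vs: "0 \<le> (\<Sum>k<K. (a k)\<^sup>2 * V k)" using Vnn by (simp add: sum_nonneg)
  have fin: "\<alpha>/4 * (\<Sum>k<K. a k * R k) \<le> 1/2 * (norm (x0 - xstar))\<^sup>2 + 3/2 * (\<Sum>k<K. (a k)\<^sup>2 * V k) + (\<Sum>k<K. a k * B k)"
    using tel D0 Dnn[of K] Vs by simp
  show ?thesis using fin unfolding a_def \<alpha>_def R_def V_def B_def by simp
qed


end
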